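(* Let $M$ and $N$ be $\lambda$-terms such that $M$ is simple. If $M$ does not improve $N$ eventually, i.e. if not $\mathrm{BT}^c(M) \le_{\mathrm{ev}} \mathrm{BT}^c(N)$, then $M \neq_\beta N$.
   Context: Untyped $\lambda$-calculus modulo $\alpha$. Head reduction step: $\lambda x_1\ldots x_n.(\lambda y.P)QQ_1\ldots Q_m \to \lambda x_1\ldots x_n.P[y:=Q]Q_1\ldots Q_m$; hnf: $\lambda x_1\ldots x_n.\,yQ_1\ldots Q_m$. Clocked Böhm tree $\mathrm{BT}^c(M)$ (coinductive): $\bot$ if $M$ has no hnf; otherwise if $M\to_h^k \lambda x_1\ldots x_n.\,yM_1\ldots M_m$ is the head reduction to hnf, $\mathrm{BT}^c(M)$ is $\lambda x_1\ldots x_n.\,y\,\mathrm{BT}^c(M_1)\ldots\mathrm{BT}^c(M_m)$ with root annotated by $k$. Positions: sequences over $\{0,1,2\}$ ($0$ abstraction body, $1$ function, $2$ argument). $T_1 \le_{\mathrm{ev}} T_2$ means $T_1,T_2$ coincide after erasing annotations and there is $\ell$ such that at every position $p$ of $T_1$ with $|p|\ge\ell$, either neither subtree at $p$ has a root annotation or both do, with annotations $k_1\le k_2$. A redex $(\lambda x.P)Q$ is simple if $x$ occurs at most once in $P$ or $Q$ is a $\beta$-normal form. The simple terms form the largest set $X$ such that each $M\in X$ either has no hnf, or its head reduction to hnf $\lambda x_1\ldots x_n.\,yM_1\ldots M_m$ contracts only simple redexes and $M_1,\dots,M_m\in X$. *)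

theory Defs
  imports Main
begin

datatype dB = Var nat | App dB dB | Abs dB

primrec dlift :: "dB \<Rightarrow> nat \<Rightarrow> dB" where
  "dlift (Var i) k = (if i < k then Var i else Var (Suc i))"
| "dlift (App s t) k = App (dlift s k) (dlift t k)"
| "dlift (Abs s) k = Abs (dlift s (Suc k))"

primrec dsubst :: "dB \<Rightarrow> dB \<Rightarrow> nat \<Rightarrow> dB" where
  "dsubst (Var i) s k = (if k < i then Var (i - 1) else if i = k then s else Var i)"
| "dsubst (App t u) s k = App (dsubst t s k) (dsubst u s k)"
| "dsubst (Abs t) s k = Abs (dsubst t (dlift s 0) (Suc k))"

inductive beta :: "dB \<Rightarrow> dB \<Rightarrow> bool" where
  beta_redex: "beta (App (Abs s) t) (dsubst s t 0)"
| beta_appL: "beta s t \<Longrightarrow> beta (App s u) (App t u)"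
| beta_appR: "beta s t \<Longrightarrow> beta (App u s) (App u t)"
| beta_abs: "beta s t \<Longrightarrow> beta (Abs s) (Abs t)"

definition beta_eq :: "dB \<Rightarrow> dB \<Rightarrow> bool" where
  "beta_eq = equivclp beta"

definition beta_nf :: "dB \<Rightarrow> bool" where
  "beta_nf M \<longleftrightarrow> \<not> (\<exists>N. beta M N)"

fun is_abs :: "dB \<Rightarrow> bool" where
  "is_abs (Abs _) = True"
| "is_abs _ = False"

inductive hred_lab :: "dB \<Rightarrow> dB \<times> dB \<Rightarrow> dB \<Rightarrow> bool" where
  hred_redex: "hred_lab (App (Abs P) Q) (P, Q) (dsubst P Q 0)"
| hred_app: "hred_lab M r N \<Longrightarrow> \<not> is_abs M \<Longrightarrow> hred_lab (App M Q) r (App N Q)"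
| hred_abs: "hred_lab M r N \<Longrightarrow> hred_lab (Abs M) r (Abs N)"

definition hred :: "dB \<Rightarrow> dB \<Rightarrow> bool" where
  "hred M N \<longleftrightarrow> (\<exists>r. hred_lab M r N)"

fun is_happ :: "dB \<Rightarrow> bool" where
  "is_happ (Var _) = True"
| "is_happ (App M _) = is_happ M"
| "is_happ (Abs _) = False"

fun is_hnf :: "dB \<Rightarrow> bool" where
  "is_hnf (Abs M) = is_hnf M"
| "is_hnf M = is_happ M"

definition has_hnf :: "dB \<Rightarrow> bool" where
  "has_hnf M \<longleftrightarrow> (\<exists>N. hred\<^sup>*\<^sup>* M N \<and> is_hnf N)"

text \<open>Number of head reduction steps to the head normal form, and the hnf itself
  (meaningful when has_hnf M).\<close>
definition hnf_steps :: "dB \<Rightarrow> nat" where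
  "hnf_steps M = (LEAST k. \<exists>N. (hred ^^ k) M N \<and> is_hnf N)"

definition hnf_of :: "dB \<Rightarrow> dB" where
  "hnf_of M = (THE N. (hred ^^ hnf_steps M) M N \<and> is_hnf N)"

fun hnf_args :: "dB \<Rightarrow> dB list" where
  "hnf_args (Abs M) = hnf_args M"
| "hnf_args (App M N) = hnf_args M @ [N]"
| "hnf_args (Var _) = []"

primrec occs :: "nat \<Rightarrow> dB \<Rightarrow> nat" where
  "occs k (Var i) = (if i = k then 1 else 0)"
| "occs k (App s t) = occs k s + occs k t"
| "occs k (Abs s) = occs (Suc k) s"

definition simple_redex :: "dB \<Rightarrow> dB \<Rightarrow> bool" where
  "simple_redex P Q \<longleftrightarrow> occs 0 P \<le> 1 \<or> beta_nf Q"

definition hred_simple :: "dB \<Rightarrow> dB \<Rightarrow> bool" where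
  "hred_simple M N \<longleftrightarrow> (\<exists>P Q. hred_lab M (P, Q) N \<and> simple_redex P Q)"

coinductive simple_term :: "dB \<Rightarrow> bool" where
  simple_no_hnf: "\<not> has_hnf M \<Longrightarrow> simple_term M"
| simple_hnf: "has_hnf M \<Longrightarrow> hred_simple\<^sup>*\<^sup>* M (hnf_of M) \<Longrightarrow>
     (\<forall>A. A \<in> set (hnf_args (hnf_of M)) \<longrightarrow> simple_term A) \<Longrightarrow> simple_term M"

text \<open>Positions are lists over {0,1,2}: 0 abstraction body, 1 function, 2 argument.
  A cursor is either the root of the subtree BTc(M) (CRoot M)
  or an inner node of the spine of an hnf (CInner H).\<close>
datatype cursor = CRoot dB | CInner dB

datatype bnode = NBot | NAbs | NApp | NVar nat

fun spine_step :: "dB \<Rightarrow> nat \<Rightarrow> cursor option" where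
  "spine_step (Abs B) d = (if d = 0 then Some (CInner B) else None)"
| "spine_step (App F A) d =
     (if d = 1 then Some (CInner F) else if d = 2 then Some (CRoot A) else None)"
| "spine_step (Var _) d = None"

fun cursor_step :: "cursor \<Rightarrow> nat \<Rightarrow> cursor option" where
  "cursor_step (CRoot M) d = (if has_hnf M then spine_step (hnf_of M) d else None)"
| "cursor_step (CInner H) d = spine_step H d"

fun cursor_walk :: "cursor \<Rightarrow> nat list \<Rightarrow> cursor option" where
  "cursor_walk c [] = Some c"
| "cursor_walk c (d # ds) = (case cursor_step c d of None \<Rightarrow> None | Some c' \<Rightarrow> cursor_walk c' ds)"

fun term_label :: "dB \<Rightarrow> bnode" where
  "term_label (Abs _) = NAbs"
| "term_label (App _ _) = NApp"
| "term_label (Var i) = NVar i"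

fun cursor_label :: "cursor \<Rightarrow> bnode" where
  "cursor_label (CRoot M) = (if has_hnf M then term_label (hnf_of M) else NBot)"
| "cursor_label (CInner H) = term_label H"

fun cursor_ann :: "cursor \<Rightarrow> nat option" where
  "cursor_ann (CRoot M) = (if has_hnf M then Some (hnf_steps M) else None)"
| "cursor_ann (CInner _) = None"

text \<open>Erased clocked Boehm tree of M: node label at each position (None = not a position).\<close>
definition bt_label :: "dB \<Rightarrow> nat list \<Rightarrow> bnode option" where
  "bt_label M p = map_option cursor_label (cursor_walk (CRoot M) p)"

definition bt_ann :: "dB \<Rightarrow> nat list \<Rightarrow> nat option" where
  "bt_ann M p = Option.bind (cursor_walk (CRoot M) p) cursor_ann"

definition bt_le_ev :: "dB \<Rightarrow> dB \<Rightarrow> bool" where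
  "bt_le_ev M N \<longleftrightarrow> bt_label M = bt_label N \<and>
     (\<exists>l. \<forall>p. bt_label M p \<noteq> None \<longrightarrow> l \<le> length p \<longrightarrow>
        (bt_ann M p = None \<and> bt_ann N p = None) \<or>
        (\<exists>k1 k2. bt_ann M p = Some k1 \<and> bt_ann N p = Some k2 \<and> k1 \<le> k2))"

end

theory Submission
  imports Defs
begin


lemma lift_lift:
  "i < k + 1 \<Longrightarrow> dlift (dlift t i) (Suc k) = dlift (dlift t k) i"
  by (induct t arbitrary: i k) auto

lemma lift_subst [simp]:
  "j < i + 1 \<Longrightarrow> dlift (dsubst t s j) i = dsubst (dlift t (i + 1)) (dlift s i) j"
  by (induct t arbitrary: i j s) (simp_all add: diff_Suc lift_lift split: nat.split)

lemma lift_subst_lt: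
  "i < j + 1 \<Longrightarrow> dlift (dsubst t s j) i = dsubst (dlift t i) (dlift s i) (j + 1)"
  by (induct t arbitrary: i j s) (auto simp add: lift_lift)

lemma subst_lift [simp]: "dsubst (dlift t k) s k = t"
  by (induct t arbitrary: k s) simp_all

lemma subst_subst:
  "i < j + 1 \<Longrightarrow> dsubst (dsubst t (dlift v i) (Suc j)) (dsubst u v j) i = dsubst (dsubst t u i) v j"
  by (induct t arbitrary: i j u v)
    (simp_all add: diff_Suc lift_lift [symmetric] lift_subst_lt split: nat.split)

lemma beta_lift: "beta s t \<Longrightarrow> beta (dlift s i) (dlift t i)"
  by (induct s t arbitrary: i rule: beta.induct) (auto intro: beta.intros)

lemma beta_subst: "beta s t \<Longrightarrow> beta (dsubst s u i) (dsubst t u i)"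
proof (induct s t arbitrary: u i rule: beta.induct)
  case (beta_redex s t)
  then show ?case using beta.beta_redex[of "dsubst s (dlift u 0) (Suc i)" "dsubst t u i"]
    by (simp add: subst_subst [symmetric])
qed (auto intro: beta.intros)

lemma relpowp_map:
  assumes "\<And>x y. R x y \<Longrightarrow> R (f x) (f y)"
  shows "(R ^^ n) x y \<Longrightarrow> (R ^^ n) (f x) (f y)"
proof (induct n arbitrary: y)
  case 0 then show ?case by simp
next
  case (Suc n)
  then obtain z where "(R ^^ n) x z" "R z y" by auto
  then show ?case using Suc assms by auto
qed

lemma bn_Abs: "(beta ^^ n) s t \<Longrightarrow> (beta ^^ n) (Abs s) (Abs t)"
  by (rule relpowp_map[where f=Abs]) (auto intro: beta.intros)

lemma bn_AppL: "(beta ^^ n) s t \<Longrightarrow> (beta ^^ n) (App s u) (App t u)"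
  by (rule relpowp_map[where f="\<lambda>x. App x u"]) (auto intro: beta.intros)

lemma bn_AppR: "(beta ^^ n) s t \<Longrightarrow> (beta ^^ n) (App u s) (App u t)"
  by (rule relpowp_map[where f="\<lambda>x. App u x"]) (auto intro: beta.intros)

lemma bn_trans: "(beta ^^ m) a b \<Longrightarrow> (beta ^^ n) b c \<Longrightarrow> (beta ^^ (m + n)) a c"
  by (simp add: relpowp_add relcompp.relcompI)

lemma bn_App: "(beta ^^ m) s t \<Longrightarrow> (beta ^^ n) u v \<Longrightarrow> (beta ^^ (m + n)) (App s u) (App t v)"
  by (rule bn_trans[OF bn_AppL bn_AppR])

lemma bn_lift: "(beta ^^ n) s t \<Longrightarrow> (beta ^^ n) (dlift s i) (dlift t i)"
  by (rule relpowp_map[where f="\<lambda>x. dlift x i"]) (auto intro: beta_lift)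

lemma bn_substL: "(beta ^^ n) s t \<Longrightarrow> (beta ^^ n) (dsubst s u i) (dsubst t u i)"
  by (rule relpowp_map[where f="\<lambda>x. dsubst x u i"]) (auto intro: beta_subst)

lemma bn_substR:
  "(beta ^^ m) Q Q' \<Longrightarrow> (beta ^^ (occs k P * m)) (dsubst P Q k) (dsubst P Q' k)"
proof (induct P arbitrary: k Q Q' m)
  case (Var i)
  then show ?case by auto
next
  case (App P1 P2)
  have "(beta ^^ (occs k P1 * m + occs k P2 * m)) (App (dsubst P1 Q k) (dsubst P2 Q k))
     (App (dsubst P1 Q' k) (dsubst P2 Q' k))"
    by (rule bn_App) (use App in auto)
  then show ?case by (simp add: algebra_simps)
next
  case (Abs P)
  have "(beta ^^ m) (dlift Q 0) (dlift Q' 0)" by (rule bn_lift) fact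
  from Abs(1)[OF this, of "Suc k"] show ?case by (auto intro: bn_Abs)
qed

lemma nf_bn: "beta_nf Q \<Longrightarrow> (beta ^^ m) Q Q' \<Longrightarrow> m = 0 \<and> Q' = Q"
proof (cases m)
  case (Suc k)
  assume "beta_nf Q" "(beta ^^ m) Q Q'"
  then show ?thesis using Suc by (metis beta_nf_def relpowp_Suc_D2)
qed auto

section \<open>Parallel reduction and Church-Rosser\<close>

inductive par :: "dB \<Rightarrow> dB \<Rightarrow> bool" where
  par_Var: "par (Var n) (Var n)"
| par_Abs: "par s s' \<Longrightarrow> par (Abs s) (Abs s')"
| par_App: "par s s' \<Longrightarrow> par t t' \<Longrightarrow> par (App s t) (App s' t')"
| par_beta: "par s s' \<Longrightarrow> par t t' \<Longrightarrow> par (App (Abs s) t) (dsubst s' t' 0)"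

lemma par_refl [simp, intro]: "par t t"
  by (induct t) (auto intro: par.intros)

lemma beta_par: "beta s t \<Longrightarrow> par s t"
  by (induct rule: beta.induct) (auto intro: par.intros)

lemma rt_App: "beta\<^sup>*\<^sup>* s s' \<Longrightarrow> beta\<^sup>*\<^sup>* t t' \<Longrightarrow> beta\<^sup>*\<^sup>* (App s t) (App s' t')"
proof -
  assume a: "beta\<^sup>*\<^sup>* s s'" "beta\<^sup>*\<^sup>* t t'"
  have "beta\<^sup>*\<^sup>* (App s t) (App s' t)" using a(1)
    by (induct rule: rtranclp_induct) (auto intro: rtranclp.rtrancl_into_rtrancl beta.intros)
  moreover have "beta\<^sup>*\<^sup>* (App s' t) (App s' t')" using a(2)
    by (induct rule: rtranclp_induct) (auto intro: rtranclp.rtrancl_into_rtrancl beta.intros)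
  ultimately show ?thesis by auto
qed

lemma rt_Abs: "beta\<^sup>*\<^sup>* s s' \<Longrightarrow> beta\<^sup>*\<^sup>* (Abs s) (Abs s')"
  by (induct rule: rtranclp_induct) (auto intro: rtranclp.rtrancl_into_rtrancl beta.intros)

lemma rt_substR: "beta\<^sup>*\<^sup>* t t' \<Longrightarrow> beta\<^sup>*\<^sup>* (dsubst s t k) (dsubst s t' k)"
  using bn_substR by (metis rtranclp_power)

lemma rt_substL: "beta\<^sup>*\<^sup>* s s' \<Longrightarrow> beta\<^sup>*\<^sup>* (dsubst s t k) (dsubst s' t k)"
  using bn_substL by (metis rtranclp_power)

lemma par_beta_rt: "par s t \<Longrightarrow> beta\<^sup>*\<^sup>* s t"
proof (induct rule: par.induct)
  case (par_beta s s' t t')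
  have "beta\<^sup>*\<^sup>* (App (Abs s) t) (App (Abs s') t')" by (intro rt_App rt_Abs) fact+
  moreover have "beta (App (Abs s') t') (dsubst s' t' 0)" by (rule beta.beta_redex)
  ultimately show ?case by auto
qed (auto intro: rt_App rt_Abs)

lemma par_lift: "par s t \<Longrightarrow> par (dlift s i) (dlift t i)"
proof (induct s t arbitrary: i rule: par.induct)
  case (par_beta s s' t t')
  then show ?case using par.par_beta[of "dlift s (Suc i)" "dlift s' (Suc i)" "dlift t i" "dlift t' i"]
    by simp
qed (auto intro: par.intros)

lemma par_subst: "par s s' \<Longrightarrow> par t t' \<Longrightarrow> par (dsubst s t k) (dsubst s' t' k)"
proof (induct s s' arbitrary: t t' k rule: par.induct)
  case (par_Var n)
  then show ?case by auto
next
  case (par_Abs s s')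
  have "par (dsubst s (dlift t 0) (Suc k)) (dsubst s' (dlift t' 0) (Suc k))"
    by (rule par_Abs(2)) (rule par_lift, rule par_Abs(3))
  then show ?case by (auto intro!: par.intros)
next
  case (par_App s s' u u')
  then show ?case by (auto intro!: par.intros)
next
  case (par_beta s s' u u')
  have "par (App (Abs (dsubst s (dlift t 0) (Suc k))) (dsubst u t k))
     (dsubst (dsubst s' (dlift t' 0) (Suc k)) (dsubst u' t' k) 0)"
    by (rule par.par_beta) (use par_beta par_lift in auto)
  then show ?case by (simp add: subst_subst[where i=0, symmetric])
qed

fun cd :: "dB \<Rightarrow> dB" where
  "cd (Var n) = Var n"
| "cd (Abs s) = Abs (cd s)"
| "cd (App (Abs s) t) = dsubst (cd s) (cd t) 0"
| "cd (App (Var n) t) = App (Var n) (cd t)"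
| "cd (App (App s u) t) = App (cd (App s u)) (cd t)"

lemma par_cd: "par s t \<Longrightarrow> par t (cd s)"
proof (induct s t rule: par.induct)
  case (par_App s s' t t')
  show ?case
  proof (cases s)
    case (Abs b)
    with par_App obtain b' where "s' = Abs b'" "par b' (cd b)"
      by (auto elim: par.cases)
    then show ?thesis using par_App Abs by (auto intro: par.intros)
  qed (use par_App in \<open>auto intro: par.intros\<close>)
qed (auto intro: par.intros par_subst)

lemma par_diamond: "par a b \<Longrightarrow> par a c \<Longrightarrow> \<exists>d. par b d \<and> par c d"
  using par_cd by blast

lemma strip: "par\<^sup>*\<^sup>* a b \<Longrightarrow> par a c \<Longrightarrow> \<exists>d. par b d \<and> par\<^sup>*\<^sup>* c d"
proof (induct arbitrary: c rule: rtranclp_induct)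
  case base then show ?case by auto
next
  case (step y z)
  then obtain d where "par y d" "par\<^sup>*\<^sup>* c d" by auto
  with step par_diamond obtain e where "par z e" "par d e" by blast
  then show ?case using \<open>par\<^sup>*\<^sup>* c d\<close> by auto
qed

lemma par_CR: "par\<^sup>*\<^sup>* a b \<Longrightarrow> par\<^sup>*\<^sup>* a c \<Longrightarrow> \<exists>d. par\<^sup>*\<^sup>* b d \<and> par\<^sup>*\<^sup>* c d"
proof (induct arbitrary: c rule: rtranclp_induct)
  case base then show ?case by auto
next
  case (step y z)
  then obtain d where d: "par\<^sup>*\<^sup>* y d" "par\<^sup>*\<^sup>* c d" by blast
  from strip[OF d(1) step(2)] obtain e where "par d e" "par\<^sup>*\<^sup>* z e" by blast
  then show ?case using d(2) by (meson rtranclp.rtrancl_into_rtrancl)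
qed

lemma par_rt_eq: "par\<^sup>*\<^sup>* = beta\<^sup>*\<^sup>*"
proof (intro ext iffI)
  fix x y assume "par\<^sup>*\<^sup>* x y" then show "beta\<^sup>*\<^sup>* x y"
    by (induct rule: rtranclp_induct) (auto dest: par_beta_rt)
next
  fix x y assume "beta\<^sup>*\<^sup>* x y" then show "par\<^sup>*\<^sup>* x y"
    by (induct rule: rtranclp_induct) (auto dest: beta_par intro: rtranclp.rtrancl_into_rtrancl)
qed

lemma beta_CR: "beta\<^sup>*\<^sup>* a b \<Longrightarrow> beta\<^sup>*\<^sup>* a c \<Longrightarrow> \<exists>d. beta\<^sup>*\<^sup>* b d \<and> beta\<^sup>*\<^sup>* c d"
  using par_CR unfolding par_rt_eq .

lemma beta_eq_join: "beta_eq M N \<Longrightarrow> \<exists>L. beta\<^sup>*\<^sup>* M L \<and> beta\<^sup>*\<^sup>* N L"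
  unfolding beta_eq_def equivclp_def
proof (induct rule: rtranclp_induct)
  case base then show ?case by auto
next
  case (step y z)
  then obtain L where L: "beta\<^sup>*\<^sup>* M L" "beta\<^sup>*\<^sup>* y L" by auto
  from step(2) consider "beta y z" | "beta z y" by (auto simp: symclp_def)
  then show ?case
  proof cases
    case 1
    then obtain d where "beta\<^sup>*\<^sup>* L d" "beta\<^sup>*\<^sup>* z d" using beta_CR[OF L(2)] by blast
    then show ?thesis using L by (meson rtranclp_trans)
  next
    case 2
    then show ?thesis using L by auto
  qed
qed



section \<open>Head contexts\<close>

fun apps :: "dB \<Rightarrow> dB list \<Rightarrow> dB" where
  "apps X [] = X"
| "apps X (R # Rs) = App (apps X Rs) R"

definition hplug :: "nat \<Rightarrow> dB list \<Rightarrow> dB \<Rightarrow> dB" where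
  "hplug a Rs X = (Abs ^^ a) (apps X Rs)"

lemma hplug_0 [simp]: "hplug 0 Rs X = apps X Rs"
  by (simp add: hplug_def)

lemma hplug_Suc [simp]: "hplug (Suc a) Rs X = Abs (hplug a Rs X)"
  by (simp add: hplug_def)

lemma is_abs_apps: "is_abs (apps X Rs) \<longleftrightarrow> Rs = [] \<and> is_abs X"
  by (cases Rs) auto

lemma hred_lab_hplug:
  "hred_lab M r N \<Longrightarrow> \<exists>a Rs. M = hplug a Rs (App (Abs (fst r)) (snd r)) \<and>
      N = hplug a Rs (dsubst (fst r) (snd r) 0)"
proof (induct rule: hred_lab.induct)
  case (hred_redex P Q)
  then show ?case by (intro exI[of _ 0] exI[of _ "[]"]) simp
next
  case (hred_app M r N Q)
  then obtain a Rs where e: "M = hplug a Rs (App (Abs (fst r)) (snd r))"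
      "N = hplug a Rs (dsubst (fst r) (snd r) 0)" by blast
  have "a = 0" using hred_app(3) e(1) by (cases a) auto
  then show ?case using e by (intro exI[of _ 0] exI[of _ "Q # Rs"]) simp
next
  case (hred_abs M r N)
  then obtain a Rs where e: "M = hplug a Rs (App (Abs (fst r)) (snd r))"
      "N = hplug a Rs (dsubst (fst r) (snd r) 0)" by blast
  then show ?case by (intro exI[of _ "Suc a"] exI[of _ Rs]) simp
qed

lemma hred_lab_apps: "hred_lab (apps (App (Abs P) Q) Rs) (P, Q) (apps (dsubst P Q 0) Rs)"
proof (induct Rs)
  case Nil then show ?case by (simp add: hred_lab.hred_redex)
next
  case (Cons R Rs)
  then show ?case by (auto intro!: hred_lab.hred_app simp: is_abs_apps)
qed

lemma hred_lab_hplugI: "hred_lab (hplug a Rs (App (Abs P) Q)) (P, Q) (hplug a Rs (dsubst P Q 0))"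
  by (induct a) (auto intro: hred_lab.hred_abs hred_lab_apps)

lemma hred_lab_iff:
  "hred_lab M (P, Q) N \<longleftrightarrow> (\<exists>a Rs. M = hplug a Rs (App (Abs P) Q) \<and> N = hplug a Rs (dsubst P Q 0))"
  using hred_lab_hplug[of M "(P,Q)" N] hred_lab_hplugI by auto

lemma hred_app_inv: "hred_lab (App M Q) r N' \<Longrightarrow> \<not> is_abs M \<Longrightarrow> \<exists>N0. hred_lab M r N0 \<and> N' = App N0 Q"
  by (cases rule: hred_lab.cases) auto

lemma hred_abs_inv: "hred_lab (Abs M) r N' \<Longrightarrow> \<exists>N0. hred_lab M r N0 \<and> N' = Abs N0"
  by (cases rule: hred_lab.cases) auto

lemma hred_det: "hred_lab M r N \<Longrightarrow> hred_lab M r' N' \<Longrightarrow> r' = r \<and> N' = N"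
proof (induct arbitrary: r' N' rule: hred_lab.induct)
  case (hred_redex P Q)
  from hred_redex show ?case by (cases rule: hred_lab.cases) auto
next
  case (hred_app M r N Q)
  then obtain N0 where "hred_lab M r' N0" "N' = App N0 Q" using hred_app_inv by blast
  then show ?case using hred_app.hyps(2) by blast
next
  case (hred_abs M r N)
  then obtain N0 where "hred_lab M r' N0" "N' = Abs N0" using hred_abs_inv by blast
  then show ?case using hred_abs.hyps(2) by blast
qed

lemma happ_no_hred: "hred_lab M r N \<Longrightarrow> \<not> is_happ M"
  by (induct rule: hred_lab.induct) auto

lemma hnf_no_hred: "hred_lab M r N \<Longrightarrow> \<not> is_hnf M"
proof (induct rule: hred_lab.induct)
  case (hred_app M r N Q)
  then show ?case using happ_no_hred[OF hred_app(1)] by simp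
qed auto

lemma not_hnf_hred: "\<not> is_hnf M \<Longrightarrow> \<exists>r N. hred_lab M r N"
proof (induct M)
  case (Var n) then show ?case by simp
next
  case (Abs M) then show ?case by (auto intro: hred_lab.hred_abs)
next
  case (App F A)
  show ?case
  proof (cases F)
    case (Abs P) then show ?thesis by (auto intro: hred_lab.hred_redex)
  next
    case (Var n) then show ?thesis using App by simp
  next
    case (App F1 F2)
    then have "\<not> is_hnf F" using App.prems by simp
    then obtain r N where "hred_lab F r N" using App.hyps by blast
    then have "hred_lab (App F A) r (App N A)"
      by (rule hred_lab.hred_app) (use App in simp)
    then show ?thesis by blast
  qed
qed

lemma not_hnf_hplug: "\<not> is_hnf M \<Longrightarrow> \<exists>a Rs P Q. M = hplug a Rs (App (Abs P) Q)"
  using not_hnf_hred hred_lab_hplug by blast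

lemma redex_not_hnf: "\<not> is_hnf (hplug a Rs (App (Abs P) Q))"
  using hnf_no_hred hred_lab_hplugI by blast

lemma is_happ_apps: "is_happ (apps (Var y) Rs)"
  by (induct Rs) auto

lemma is_hnf_hplug: "is_hnf (hplug a Rs (Var y))"
proof (induct a)
  case 0 then show ?case by (cases Rs) (auto simp: is_happ_apps)
qed simp

lemma happ_apps: "is_happ M \<Longrightarrow> \<exists>Rs y. M = apps (Var y) Rs"
proof (induct M)
  case (Var n) then show ?case by (intro exI[of _ "[]"]) auto
next
  case (App F A)
  then obtain Rs y where "F = apps (Var y) Rs" by auto
  then show ?case by (intro exI[of _ "A # Rs"]) auto
qed simp

lemma hnf_hplug: "is_hnf M \<Longrightarrow> \<exists>a Rs y. M = hplug a Rs (Var y)"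
proof (induct M)
  case (Var n) then show ?case by (intro exI[of _ 0] exI[of _ "[]"] exI[of _ n]) simp
next
  case (Abs M)
  then obtain a Rs y where "M = hplug a Rs (Var y)" by auto
  then show ?case by (intro exI[of _ "Suc a"]) auto
next
  case (App F A)
  then have "is_happ (App F A)" by simp
  then show ?case using happ_apps by (metis hplug_0)
qed

definition hstep :: "bool \<Rightarrow> dB \<Rightarrow> dB \<Rightarrow> bool" where
  "hstep s X Y \<longleftrightarrow> (\<exists>P Q. hred_lab X (P, Q) Y \<and> (s \<longrightarrow> simple_redex P Q))"

lemma hred_hstep: "hred = hstep False"
  by (auto simp: hred_def hstep_def fun_eq_iff)

lemma hred_simple_hstep: "hred_simple = hstep True"
  by (auto simp: hred_simple_def hstep_def fun_eq_iff)

lemma hred_det': "hred M N \<Longrightarrow> hred M N' \<Longrightarrow> N' = N"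
  using hred_det by (auto simp: hred_def)

lemma hnf_no_hred': "is_hnf M \<Longrightarrow> \<not> hred M N"
  using hnf_no_hred by (auto simp: hred_def)

lemma hnf_unique:
  "(hred ^^ k) M H \<Longrightarrow> is_hnf H \<Longrightarrow> (hred ^^ k') M H' \<Longrightarrow> is_hnf H' \<Longrightarrow> k' = k \<and> H' = H"
proof (induct k arbitrary: M k')
  case 0
  show ?case
  proof (cases k')
    case (Suc k'')
    then obtain z where "hred M z" using 0 by (metis relpowp_Suc_D2)
    then show ?thesis using 0 hnf_no_hred' by simp
  qed (use 0 in simp)
next
  case (Suc k)
  from Suc.prems(1) obtain M1 where M1: "hred M M1" "(hred ^^ k) M1 H"
    by (metis relpowp_Suc_D2)
  show ?case
  proof (cases k')
    case 0
    then show ?thesis using Suc.prems M1 hnf_no_hred' by auto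
  next
    case (Suc k'')
    then obtain M2 where M2: "hred M M2" "(hred ^^ k'') M2 H'"
      using Suc.prems(3) by (metis relpowp_Suc_D2)
    have "M2 = M1" using M1 M2 hred_det' by blast
    then show ?thesis using Suc.hyps[OF M1(2) Suc.prems(2) _ Suc.prems(4)] M2 \<open>k' = Suc k''\<close> by auto
  qed
qed

lemma hnf_char:
  assumes "(hred ^^ k) M H" "is_hnf H"
  shows "has_hnf M \<and> hnf_steps M = k \<and> hnf_of M = H"
proof -
  have h: "has_hnf M" using assms by (auto simp: has_hnf_def intro: relpowp_imp_rtranclp)
  have s: "hnf_steps M = k" unfolding hnf_steps_def
    by (rule Least_equality) (use assms hnf_unique in \<open>blast, metis order_refl\<close>)
  have "hnf_of M = H" unfolding hnf_of_def s
    by (rule the_equality) (use assms hnf_unique in blast)+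
  then show ?thesis using h s by auto
qed

lemma has_hnf_D: "has_hnf M \<Longrightarrow> (hred ^^ hnf_steps M) M (hnf_of M) \<and> is_hnf (hnf_of M)"
proof -
  assume "has_hnf M"
  then obtain H k where "(hred ^^ k) M H" "is_hnf H"
    by (auto simp: has_hnf_def dest: rtranclp_imp_relpowp)
  then show ?thesis using hnf_char by metis
qed

lemma has_hnf_iff: "has_hnf M \<longleftrightarrow> (\<exists>k H. (hred ^^ k) M H \<and> is_hnf H)"
  using has_hnf_D hnf_char by blast

lemma relpowp_mono': fixes R S :: "'a \<Rightarrow> 'a \<Rightarrow> bool" shows "(\<And>x y. R x y \<Longrightarrow> S x y) \<Longrightarrow> (R ^^ n) x y \<Longrightarrow> (S ^^ n) x y"
proof (induct n arbitrary: y)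
  case (Suc n)
  from Suc.prems(2) obtain z where "(R ^^ n) x z" "R z y" by auto
  then show ?case using Suc by (meson relpowp_Suc_I)
qed simp

lemma hstep_hred: "(hstep s ^^ n) x y \<Longrightarrow> (hred ^^ n) x y"
  by (rule relpowp_mono') (auto simp: hred_hstep hstep_def)

lemma hnf_args_apps: "hnf_args (apps (Var y) Rs) = rev Rs"
  by (induct Rs) auto

lemma hnf_args_hplug: "hnf_args (hplug a Rs (Var y)) = rev Rs"
  by (induct a) (auto simp: hnf_args_apps)

lemma simple_path:
  assumes "simple_term A" "has_hnf A"
  shows "(hstep True ^^ hnf_steps A) A (hnf_of A) \<and> (\<forall>R\<in>set (hnf_args (hnf_of A)). simple_term R)"
  using assms(1)
proof (cases rule: simple_term.cases)
  case simple_no_hnf then show ?thesis using assms by simp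
next
  case simple_hnf
  then obtain j where j: "(hstep True ^^ j) A (hnf_of A)"
    by (auto simp: hred_simple_hstep dest: rtranclp_imp_relpowp)
  have "j = hnf_steps A" using hnf_unique[OF hstep_hred[OF j]] has_hnf_D[OF assms(2)] by auto
  then show ?thesis using j simple_hnf by auto
qed



inductive lsteps :: "nat \<Rightarrow> dB list \<Rightarrow> dB list \<Rightarrow> bool" where
  ls_Nil: "lsteps 0 [] []"
| ls_Cons: "lsteps n Rs Rs' \<Longrightarrow> (beta ^^ m) R R' \<Longrightarrow> lsteps (m + n) (R # Rs) (R' # Rs')"

lemma lsteps_refl: "lsteps 0 Rs Rs"
proof (induct Rs)
  case Nil show ?case by (rule ls_Nil)
next
  case (Cons R Rs)
  have "(beta ^^ 0) R R" by simp
  from ls_Cons[OF Cons this] show ?case by simp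
qed

lemma lsteps_trans: "lsteps n A B \<Longrightarrow> lsteps m B C \<Longrightarrow> lsteps (n + m) A C"
proof (induct arbitrary: m C rule: lsteps.induct)
  case ls_Nil then show ?case by simp
next
  case (ls_Cons n Rs Rs' k R R')
  from ls_Cons(4) obtain m1 m2 C1 R'' where "C = R'' # C1" "m = m1 + m2" "lsteps m2 Rs' C1"
    "(beta ^^ m1) R' R''"
    by (cases rule: lsteps.cases) auto
  then have "lsteps ((k + m1) + (n + m2)) (R # Rs) (R'' # C1)"
    using ls_Cons(2)[of m2 C1] bn_trans[OF ls_Cons(3)] lsteps.ls_Cons by blast
  then show ?case using \<open>C = R'' # C1\<close> \<open>m = m1 + m2\<close> by (simp add: algebra_simps)
qed

lemma lsteps_length: "lsteps n A B \<Longrightarrow> length A = length B"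
  by (induct rule: lsteps.induct) auto

lemma lsteps_rt: "lsteps n A B \<Longrightarrow> list_all2 (\<lambda>x y. beta\<^sup>*\<^sup>* x y) A B"
  by (induct rule: lsteps.induct) (auto intro: relpowp_imp_rtranclp)

lemma b_apps: "beta X X' \<Longrightarrow> beta (apps X Rs) (apps X' Rs)"
  by (induct Rs) (auto intro: beta.intros)

lemma bn_apps: "(beta ^^ m) X X' \<Longrightarrow> (beta ^^ m) (apps X Rs) (apps X' Rs)"
  by (rule relpowp_map[where f="\<lambda>x. apps x Rs"]) (rule b_apps)

lemma lsteps_apps: "lsteps n Rs Rs' \<Longrightarrow> (beta ^^ n) (apps X Rs) (apps X Rs')"
proof (induct rule: lsteps.induct)
  case ls_Nil then show ?case by simp
next
  case (ls_Cons n Rs Rs' m R R')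
  then show ?case using bn_App[OF ls_Cons(2) ls_Cons(3)] by (simp add: add.commute)
qed

lemma bn_abspow: "(beta ^^ n) s t \<Longrightarrow> (beta ^^ n) ((Abs ^^ a) s) ((Abs ^^ a) t)"
  by (induct a) (auto intro: bn_Abs)

lemma bn_hplug: "(beta ^^ m) X X' \<Longrightarrow> lsteps n Rs Rs' \<Longrightarrow>
   (beta ^^ (m + n)) (hplug a Rs X) (hplug a Rs' X')"
  unfolding hplug_def
  by (rule bn_abspow, rule bn_trans[OF bn_apps lsteps_apps])

lemma beta_App_inv: "beta (App s u) B \<Longrightarrow> (\<exists>P. s = Abs P \<and> B = dsubst P u 0) \<or>
   (\<exists>t. beta s t \<and> B = App t u) \<or> (\<exists>t. beta u t \<and> B = App s t)"
  by (cases rule: beta.cases) auto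

lemma beta_Abs_inv: "beta (Abs s) B \<Longrightarrow> \<exists>t. beta s t \<and> B = Abs t"
  by (cases rule: beta.cases) auto

lemma beta_Var_inv: "\<not> beta (Var i) B"
  by (auto elim: beta.cases)

lemma apps_App_not_Abs: "apps (App X Y) Rs \<noteq> Abs P"
  by (cases Rs) auto

lemma apps_Var_not_Abs: "apps (Var y) Rs \<noteq> Abs P"
  by (cases Rs) auto

lemma abspow_beta: "beta ((Abs ^^ a) s) B \<Longrightarrow> \<exists>s'. B = (Abs ^^ a) s' \<and> beta s s'"
proof (induct a arbitrary: B)
  case (Suc a)
  from Suc.prems have "beta (Abs ((Abs ^^ a) s)) B" by simp
  then obtain t where "B = Abs t" "beta ((Abs ^^ a) s) t" using beta_Abs_inv by blast
  then show ?case using Suc.hyps by fastforce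
qed simp

lemma apps_var_beta: "beta (apps (Var y) Rs) B \<Longrightarrow> \<exists>Rs'. B = apps (Var y) Rs' \<and> lsteps 1 Rs Rs'"
proof (induct Rs arbitrary: B)
  case Nil then show ?case using beta_Var_inv by simp
next
  case (Cons R Rs)
  from Cons.prems have "beta (App (apps (Var y) Rs) R) B" by simp
  from beta_App_inv[OF this] show ?case
  proof (elim disjE exE conjE)
    fix P assume "apps (Var y) Rs = Abs P" then show ?case using apps_Var_not_Abs by blast
  next
    fix t assume t: "beta (apps (Var y) Rs) t" "B = App t R"
    then obtain Rs' where "t = apps (Var y) Rs'" "lsteps 1 Rs Rs'" using Cons.hyps by blast
    then show ?case using t ls_Cons[of 1 Rs Rs' 0 R R] by (intro exI[of _ "R # Rs'"]) simp
  next
    fix t assume t: "beta R t" "B = App (apps (Var y) Rs) t"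
    have b1: "(beta ^^ 1) R t" using t(1) by (metis relpowp_1)
    show ?case using ls_Cons[OF lsteps_refl b1] t
      by (intro exI[of _ "t # Rs"]) simp
  qed
qed

lemma hnf_bn: "(beta ^^ n) (hplug a Rs (Var y)) B \<Longrightarrow> \<exists>Rs'. B = hplug a Rs' (Var y) \<and> lsteps n Rs Rs'"
proof (induct n arbitrary: B)
  case 0 then show ?case by (auto intro: lsteps_refl)
next
  case (Suc n)
  from Suc.prems obtain B0 where "(beta ^^ n) (hplug a Rs (Var y)) B0" "beta B0 B" by auto
  then obtain Rs0 where r0: "B0 = hplug a Rs0 (Var y)" "lsteps n Rs Rs0" "beta B0 B" using Suc.hyps by blast
  then obtain s' where s': "B = (Abs ^^ a) s'" "beta (apps (Var y) Rs0) s'"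
    using abspow_beta by (metis hplug_def)
  then obtain Rs' where "s' = apps (Var y) Rs'" "lsteps 1 Rs0 Rs'" using apps_var_beta by blast
  then show ?case using lsteps_trans[OF r0(2), of 1 Rs'] s' by (auto simp: hplug_def)
qed

lemma redex_apps_beta:
  "beta (apps (App (Abs P) Q) Rs) B \<Longrightarrow>
     B = apps (dsubst P Q 0) Rs \<or>
     (\<exists>P'. beta P P' \<and> B = apps (App (Abs P') Q) Rs) \<or>
     (\<exists>Q'. beta Q Q' \<and> B = apps (App (Abs P) Q') Rs) \<or>
     (\<exists>Rs'. lsteps 1 Rs Rs' \<and> B = apps (App (Abs P) Q) Rs')"
proof (induct Rs arbitrary: B)
  case Nil
  from Nil have "beta (App (Abs P) Q) B" by simp
  from beta_App_inv[OF this] show ?case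
  proof (elim disjE exE conjE)
    fix t assume "beta (Abs P) t" "B = App t Q"
    then obtain P' where "t = Abs P'" "beta P P'" using beta_Abs_inv by blast
    then show ?case using \<open>B = App t Q\<close> by auto
  qed auto
next
  case (Cons R Rs)
  from Cons.prems have "beta (App (apps (App (Abs P) Q) Rs) R) B" by simp
  from beta_App_inv[OF this] show ?case
  proof (elim disjE exE conjE)
    fix P0 assume "apps (App (Abs P) Q) Rs = Abs P0" then show ?case using apps_App_not_Abs by blast
  next
    fix t assume t: "beta (apps (App (Abs P) Q) Rs) t" "B = App t R"
    have l: "lsteps 1 Rs Rs' \<Longrightarrow> lsteps 1 (R # Rs) (R # Rs')" for Rs'
      using ls_Cons[of 1 Rs Rs' 0 R R] by simp
    from Cons.hyps[OF t(1)] show ?case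
    proof (elim disjE exE conjE)
      assume "t = apps (dsubst P Q 0) Rs" then show ?case using t by simp
    next
      fix P' assume "beta P P'" "t = apps (App (Abs P') Q) Rs"
      then show ?case using t by (intro disjI2 disjI1 exI[of _ P']) simp
    next
      fix Q' assume "beta Q Q'" "t = apps (App (Abs P) Q') Rs"
      then show ?case using t by (intro disjI2 disjI2 disjI1 exI[of _ Q']) simp
    next
      fix Rs' assume "lsteps 1 Rs Rs'" "t = apps (App (Abs P) Q) Rs'"
      then show ?case using t l by (intro disjI2 disjI2 disjI2 exI[of _ "R # Rs'"]) simp
    qed
  next
    fix t assume t: "beta R t" "B = App (apps (App (Abs P) Q) Rs) t"
    have b1: "(beta ^^ 1) R t" using t(1) by (metis relpowp_1)
    show ?case using ls_Cons[OF lsteps_refl b1] t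
      by (intro disjI2 disjI2 disjI2 exI[of _ "t # Rs"]) simp
  qed
qed

lemma redex_hplug_beta:
  "beta (hplug a Rs (App (Abs P) Q)) B \<Longrightarrow>
     B = hplug a Rs (dsubst P Q 0) \<or>
     (\<exists>P'. beta P P' \<and> B = hplug a Rs (App (Abs P') Q)) \<or>
     (\<exists>Q'. beta Q Q' \<and> B = hplug a Rs (App (Abs P) Q')) \<or>
     (\<exists>Rs'. lsteps 1 Rs Rs' \<and> B = hplug a Rs' (App (Abs P) Q))"
proof -
  assume "beta (hplug a Rs (App (Abs P) Q)) B"
  then obtain s' where s': "B = (Abs ^^ a) s'" "beta (apps (App (Abs P) Q) Rs) s'"
    using abspow_beta unfolding hplug_def by blast
  from redex_apps_beta[OF s'(2)] show ?thesis unfolding hplug_def s'(1) by blast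
qed

lemma redex_decomp:
  "(beta ^^ n) (hplug a Rs (App (Abs P) Q)) B \<Longrightarrow>
    (\<exists>P' Q' Rs' nP nQ nR. B = hplug a Rs' (App (Abs P') Q') \<and> (beta ^^ nP) P P' \<and>
        (beta ^^ nQ) Q Q' \<and> lsteps nR Rs Rs' \<and> nP + nQ + nR = n) \<or>
    (\<exists>P' Q' Rs' nP nQ nR m. (beta ^^ m) (hplug a Rs' (dsubst P' Q' 0)) B \<and> (beta ^^ nP) P P' \<and>
        (beta ^^ nQ) Q Q' \<and> lsteps nR Rs Rs' \<and> nP + nQ + nR + 1 + m = n)"
proof (induct n arbitrary: B)
  case 0
  then show ?case by (intro disjI1 exI[of _ P] exI[of _ Q] exI[of _ Rs] exI[of _ 0]) (auto intro: lsteps_refl)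
next
  case (Suc n)
  from Suc.prems obtain B0 where B0: "(beta ^^ n) (hplug a Rs (App (Abs P) Q)) B0" "beta B0 B" by auto
  from Suc.hyps[OF B0(1)] show ?case
  proof (elim disjE exE conjE)
    fix P' Q' Rs' nP nQ nR
    assume h: "B0 = hplug a Rs' (App (Abs P') Q')" "(beta ^^ nP) P P'" "(beta ^^ nQ) Q Q'"
      "lsteps nR Rs Rs'" "nP + nQ + nR = n"
    from redex_hplug_beta[OF B0(2)[unfolded h(1)]] show ?case
    proof (elim disjE exE conjE)
      assume "B = hplug a Rs' (dsubst P' Q' 0)"
      then show ?case using h by (intro disjI2 exI[of _ P'] exI[of _ Q'] exI[of _ Rs'] exI[of _ nP] exI[of _ nQ] exI[of _ nR] exI[of _ 0]) auto
    next
      fix P'' assume "beta P' P''" "B = hplug a Rs' (App (Abs P'') Q')"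
      then show ?case using h relpowp_Suc_I[of nP beta P P' P'']
        by (intro disjI1 exI[of _ P''] exI[of _ Q'] exI[of _ Rs'] exI[of _ "Suc nP"] exI[of _ nQ] exI[of _ nR]) auto
    next
      fix Q'' assume "beta Q' Q''" "B = hplug a Rs' (App (Abs P') Q'')"
      then show ?case using h relpowp_Suc_I[of nQ beta Q Q' Q'']
        by (intro disjI1 exI[of _ P'] exI[of _ Q''] exI[of _ Rs'] exI[of _ nP] exI[of _ "Suc nQ"] exI[of _ nR]) auto
    next
      fix Rs'' assume "lsteps 1 Rs' Rs''" "B = hplug a Rs'' (App (Abs P') Q')"
      then show ?case using h lsteps_trans[of nR Rs Rs' 1 Rs'']
        by (intro disjI1 exI[of _ P'] exI[of _ Q'] exI[of _ Rs''] exI[of _ nP] exI[of _ nQ] exI[of _ "nR + 1"]) auto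
    qed
  next
    fix P' Q' Rs' nP nQ nR m
    assume h: "(beta ^^ m) (hplug a Rs' (dsubst P' Q' 0)) B0" "(beta ^^ nP) P P'" "(beta ^^ nQ) Q Q'"
      "lsteps nR Rs Rs'" "nP + nQ + nR + 1 + m = n"
    then show ?case using B0(2) relpowp_Suc_I[of m beta _ B0 B]
      by (intro disjI2 exI[of _ P'] exI[of _ Q'] exI[of _ Rs'] exI[of _ nP] exI[of _ nQ] exI[of _ nR] exI[of _ "Suc m"]) auto
  qed
qed

lemma contract_cost:
  "(beta ^^ nP) P P' \<Longrightarrow> (beta ^^ nQ) Q Q' \<Longrightarrow> lsteps nR Rs Rs' \<Longrightarrow>
    (beta ^^ (occs 0 P * nQ + nP + nR)) (hplug a Rs (dsubst P Q 0)) (hplug a Rs' (dsubst P' Q' 0))"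
  by (rule bn_hplug[OF bn_trans[OF bn_substR bn_substL]])

lemma simple_cost:
  "simple_redex P Q \<Longrightarrow> (beta ^^ nQ) Q Q' \<Longrightarrow> occs 0 P * nQ \<le> nQ"
  unfolding simple_redex_def using nf_bn
  by (metis le_refl mult_0_right mult_le_cancel2 mult_1)



section \<open>Forward projection of head reduction\<close>

lemma FW:
  assumes "(hstep s ^^ k) A H" "is_hnf H" "(beta ^^ n) A B"
  shows "\<exists>j a y Rs Rs' c. (hred ^^ j) B (hplug a Rs' (Var y)) \<and> H = hplug a Rs (Var y) \<and>
     lsteps c Rs Rs' \<and> j \<le> k \<and> (s \<longrightarrow> c + (k - j) \<le> n)"
  using assms
proof (induct k arbitrary: A n B)
  case 0
  then have "A = H" by simp
  obtain a Rs y where H: "H = hplug a Rs (Var y)" using hnf_hplug[OF 0(2)] by blast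
  obtain Rs' where "B = hplug a Rs' (Var y)" "lsteps n Rs Rs'"
    using hnf_bn 0(3) \<open>A = H\<close> H by blast
  then show ?case using H
    by (intro exI[of _ 0] exI[of _ a] exI[of _ y] exI[of _ Rs] exI[of _ Rs'] exI[of _ n]) simp
next
  case (Suc k)
  from Suc.prems(1) obtain A1 where A1: "hstep s A A1" "(hstep s ^^ k) A1 H"
    by (metis relpowp_Suc_D2)
  then obtain P Q where PQ: "hred_lab A (P,Q) A1" "s \<longrightarrow> simple_redex P Q"
    by (auto simp: hstep_def)
  then obtain a0 Rs0 where e: "A = hplug a0 Rs0 (App (Abs P) Q)" "A1 = hplug a0 Rs0 (dsubst P Q 0)"
    using hred_lab_iff by blast
  from redex_decomp[OF Suc.prems(3)[unfolded e(1)]] show ?case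
  proof (elim disjE exE conjE)
    fix P' Q' Rs' nP nQ nR
    assume h: "B = hplug a0 Rs' (App (Abs P') Q')" "(beta ^^ nP) P P'" "(beta ^^ nQ) Q Q'"
      "lsteps nR Rs0 Rs'" "nP + nQ + nR = n"
    define B1 where "B1 = hplug a0 Rs' (dsubst P' Q' 0)"
    have hB: "hred B B1" unfolding h(1) B1_def hred_def using hred_lab_hplugI by blast
    have c: "(beta ^^ (occs 0 P * nQ + nP + nR)) A1 B1"
      unfolding e(2) B1_def by (rule contract_cost[OF h(2-4)])
    obtain j a y Rs Rs'' c where IH: "(hred ^^ j) B1 (hplug a Rs'' (Var y))" "H = hplug a Rs (Var y)"
      "lsteps c Rs Rs''" "j \<le> k" "s \<longrightarrow> c + (k - j) \<le> occs 0 P * nQ + nP + nR"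
      using Suc.hyps[OF A1(2) Suc.prems(2) c] by blast
    have hj: "(hred ^^ Suc j) B (hplug a Rs'' (Var y))" using hB IH(1) by (rule relpowp_Suc_I2)
    have oc: "s \<longrightarrow> occs 0 P * nQ \<le> nQ" using PQ(2) simple_cost h(3) by blast
    have fin: "s \<longrightarrow> c + (Suc k - Suc j) \<le> n"
    proof
      assume s: s
      then have "occs 0 P * nQ \<le> nQ" "c + (k - j) \<le> occs 0 P * nQ + nP + nR" using oc IH(5) by blast+
      then show "c + (Suc k - Suc j) \<le> n" using h(5) by linarith
    qed
    have "Suc j \<le> Suc k" using IH(4) by simp
    then show ?case using hj IH(2,3) fin by blast
  next
    fix P' Q' Rs' nP nQ nR m
    assume h: "(beta ^^ m) (hplug a0 Rs' (dsubst P' Q' 0)) B" "(beta ^^ nP) P P'" "(beta ^^ nQ) Q Q'"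
      "lsteps nR Rs0 Rs'" "nP + nQ + nR + 1 + m = n"
    have c: "(beta ^^ ((occs 0 P * nQ + nP + nR) + m)) A1 B"
      unfolding e(2) by (rule bn_trans[OF contract_cost[OF h(2-4)] h(1)])
    obtain j a y Rs Rs'' c where IH: "(hred ^^ j) B (hplug a Rs'' (Var y))" "H = hplug a Rs (Var y)"
      "lsteps c Rs Rs''" "j \<le> k" "s \<longrightarrow> c + (k - j) \<le> occs 0 P * nQ + nP + nR + m"
      using Suc.hyps[OF A1(2) Suc.prems(2) c] by blast
    have oc: "s \<longrightarrow> occs 0 P * nQ \<le> nQ" using PQ(2) simple_cost h(3) by blast
    have fin: "s \<longrightarrow> c + (Suc k - j) \<le> n"
    proof
      assume s: s
      then have "occs 0 P * nQ \<le> nQ" "c + (k - j) \<le> occs 0 P * nQ + nP + nR + m" using oc IH(5) by blast+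
      then show "c + (Suc k - j) \<le> n" using h(5) IH(4) by linarith
    qed
    have "j \<le> Suc k" using IH(4) by simp
    then show ?case using IH(1,2,3) fin by blast
  qed
qed

section \<open>Weak head splitting of parallel reduction\<close>

definition whstep :: "dB \<Rightarrow> dB \<Rightarrow> bool" where
  "whstep M M' \<longleftrightarrow> (\<exists>P Q Rs. M = apps (App (Abs P) Q) Rs \<and> M' = apps (dsubst P Q 0) Rs)"

lemma whstep_hred: "whstep M M' \<Longrightarrow> hred M M'"
  unfolding whstep_def hred_def using hred_lab_apps by blast

lemma rtranclp_map:
  assumes "\<And>x y. R x y \<Longrightarrow> S (f x) (f y)"
  shows "R\<^sup>*\<^sup>* x y \<Longrightarrow> S\<^sup>*\<^sup>* (f x) (f y)"
proof (induct rule: rtranclp_induct)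
  case base then show ?case by (rule rtranclp.rtrancl_refl)
next
  case (step y z)
  show ?case by (rule rtranclp.rtrancl_into_rtrancl[OF step(3) assms[OF step(2)]])
qed

lemma whs_hred: "whstep\<^sup>*\<^sup>* M L \<Longrightarrow> hred\<^sup>*\<^sup>* M L"
  using rtranclp_map[where f="\<lambda>x. x" and R=whstep and S=hred] whstep_hred by blast

lemma apps_apps: "apps (apps X A) B = apps X (B @ A)"
  by (induct B) auto

lemma apps_snoc: "apps X (Rs @ [R]) = apps (App X R) Rs"
  using apps_apps[of X "[R]" Rs] by simp

lemma whstep_apps: "whstep M L \<Longrightarrow> whstep (apps M Rs) (apps L Rs)"
  unfolding whstep_def
proof (elim exE conjE)
  fix P Q Rs0 assume "M = apps (App (Abs P) Q) Rs0" "L = apps (dsubst P Q 0) Rs0"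
  then show "\<exists>P Q Rs'. apps M Rs = apps (App (Abs P) Q) Rs' \<and> apps L Rs = apps (dsubst P Q 0) Rs'"
    by (intro exI[of _ P] exI[of _ Q] exI[of _ "Rs @ Rs0"]) (simp add: apps_apps)
qed

lemma whs_apps: "whstep\<^sup>*\<^sup>* M L \<Longrightarrow> whstep\<^sup>*\<^sup>* (apps M Rs) (apps L Rs)"
  by (rule rtranclp_map[where f="\<lambda>x. apps x Rs"]) (rule whstep_apps)

lemma dsubst_apps: "dsubst (apps X Rs) t k = apps (dsubst X t k) (map (\<lambda>R. dsubst R t k) Rs)"
  by (induct Rs) auto

lemma whstep_subst: "whstep M L \<Longrightarrow> whstep (dsubst M t k) (dsubst L t k)"
  unfolding whstep_def
proof (elim exE conjE)
  fix P Q Rs assume e: "M = apps (App (Abs P) Q) Rs" "L = apps (dsubst P Q 0) Rs"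
  have "dsubst (dsubst P Q 0) t k = dsubst (dsubst P (dlift t 0) (Suc k)) (dsubst Q t k) 0"
    using subst_subst[of 0 k P t Q] by simp
  then show "\<exists>P Q Rs. dsubst M t k = apps (App (Abs P) Q) Rs \<and> dsubst L t k = apps (dsubst P Q 0) Rs"
    using e by (auto simp: dsubst_apps)
qed

lemma whs_subst: "whstep\<^sup>*\<^sup>* M L \<Longrightarrow> whstep\<^sup>*\<^sup>* (dsubst M t k) (dsubst L t k)"
  by (rule rtranclp_map[where f="\<lambda>x. dsubst x t k"]) (rule whstep_subst)

inductive pw :: "dB \<Rightarrow> dB \<Rightarrow> bool" where
  pw_Abs: "par b b' \<Longrightarrow> pw (Abs b) (Abs b')"
| pw_Var: "list_all2 par Rs Rs' \<Longrightarrow> pw (apps (Var y) Rs) (apps (Var y) Rs')"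
| pw_Red: "par P P' \<Longrightarrow> par Q Q' \<Longrightarrow> list_all2 par Rs Rs' \<Longrightarrow>
    pw (apps (App (Abs P) Q) Rs) (apps (App (Abs P') Q') Rs')"

definition wsplit :: "dB \<Rightarrow> dB \<Rightarrow> bool" where
  "wsplit M N \<longleftrightarrow> (\<exists>L. whstep\<^sup>*\<^sup>* M L \<and> pw L N)"

lemma wsplit_prefix: "whstep\<^sup>*\<^sup>* M M1 \<Longrightarrow> wsplit M1 N \<Longrightarrow> wsplit M N"
  unfolding wsplit_def by (meson rtranclp_trans)

lemma la2_snoc: "list_all2 P (xs @ [x]) zs \<Longrightarrow> \<exists>ys y. zs = ys @ [y] \<and> list_all2 P xs ys \<and> P x y"
proof -
  assume a: "list_all2 P (xs @ [x]) zs"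
  then obtain us vs where uv: "zs = us @ vs" "list_all2 P xs us" "list_all2 P [x] vs"
    by (auto simp: list_all2_append1)
  then obtain y where "vs = [y]" "P x y" by (auto simp: list_all2_Cons1)
  then show ?thesis using uv by blast
qed

lemma pw_apps: "pw L N \<Longrightarrow> list_all2 par Rs Rs' \<Longrightarrow> pw (apps L Rs) (apps N Rs')"
proof (induct rule: pw.induct)
  case (pw_Abs b b')
  show ?case
  proof (cases Rs rule: rev_exhaust)
    case Nil then show ?thesis using pw_Abs pw.pw_Abs by simp
  next
    case (snoc Rs0 Q)
    from la2_snoc[OF pw_Abs(2)[unfolded snoc]] obtain Rs0' Q' where
      e: "Rs' = Rs0' @ [Q']" "list_all2 par Rs0 Rs0'" "par Q Q'" by blast
    have "pw (apps (App (Abs b) Q) Rs0) (apps (App (Abs b') Q') Rs0')"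
      by (rule pw.pw_Red[OF pw_Abs(1) e(3) e(2)])
    then show ?thesis using snoc e(1) by (simp only: apps_snoc)
  qed
next
  case (pw_Var Rs0 Rs0' y)
  have "pw (apps (Var y) (Rs @ Rs0)) (apps (Var y) (Rs' @ Rs0'))"
    by (rule pw.pw_Var, rule list_all2_appendI) fact+
  then show ?case by (simp only: apps_apps)
next
  case (pw_Red P P' Q Q' Rs0 Rs0')
  have "pw (apps (App (Abs P) Q) (Rs @ Rs0)) (apps (App (Abs P') Q') (Rs' @ Rs0'))"
    by (rule pw.pw_Red, fact, fact, rule list_all2_appendI) fact+
  then show ?case by (simp only: apps_apps)
qed

lemma wsplit_apps: "wsplit M N \<Longrightarrow> list_all2 par Rs Rs' \<Longrightarrow> wsplit (apps M Rs) (apps N Rs')"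
  unfolding wsplit_def using whs_apps pw_apps by blast

lemma la2_par_subst: "list_all2 par Rs Rs' \<Longrightarrow> par t t' \<Longrightarrow>
    list_all2 par (map (\<lambda>R. dsubst R t k) Rs) (map (\<lambda>R. dsubst R t' k) Rs')"
  unfolding list_all2_map1 list_all2_map2
  by (erule list_all2_mono) (erule par_subst)

lemma pw_refl_split: "pw L N \<Longrightarrow> wsplit L N"
  unfolding wsplit_def by blast

lemma wsplit_subst:
  assumes "wsplit s s'" "par t t'" "wsplit t t'"
  shows "wsplit (dsubst s t k) (dsubst s' t' k)"
proof -
  from assms(1) obtain L where L: "whstep\<^sup>*\<^sup>* s L" "pw L s'" unfolding wsplit_def by blast
  have "wsplit (dsubst L t k) (dsubst s' t' k)"
    using L(2)
  proof (cases rule: pw.cases)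
    case (pw_Abs b b')
    have "par (dsubst b (dlift t 0) (Suc k)) (dsubst b' (dlift t' 0) (Suc k))"
      by (rule par_subst[OF pw_Abs(3) par_lift[OF assms(2)]])
    then have "pw (dsubst L t k) (dsubst s' t' k)" unfolding pw_Abs(1,2) by (simp add: pw.pw_Abs)
    then show ?thesis by (rule pw_refl_split)
  next
    case (pw_Var Rs Rs' y)
    have la: "list_all2 par (map (\<lambda>R. dsubst R t k) Rs) (map (\<lambda>R. dsubst R t' k) Rs')"
      by (rule la2_par_subst[OF pw_Var(3) assms(2)])
    have ds: "dsubst (apps (Var y) Rs) t k = apps (dsubst (Var y) t k) (map (\<lambda>R. dsubst R t k) Rs)"
      "dsubst (apps (Var y) Rs') t' k = apps (dsubst (Var y) t' k) (map (\<lambda>R. dsubst R t' k) Rs')"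
      by (rule dsubst_apps)+
    consider "k < y" | "y = k" | "\<not> k < y" "y \<noteq> k" by blast
    then show ?thesis
    proof cases
      case 1
      then have "dsubst (Var y) t k = Var (y - 1)" "dsubst (Var y) t' k = Var (y - 1)" by simp_all
      then show ?thesis using pw_Var(1,2) ds pw.pw_Var[OF la, of "y - 1"] pw_refl_split by metis
    next
      case 2
      then have "dsubst (Var y) t k = t" "dsubst (Var y) t' k = t'" by simp_all
      then show ?thesis using pw_Var(1,2) ds wsplit_apps[OF assms(3) la] by metis
    next
      case 3
      then have "dsubst (Var y) t k = Var y" "dsubst (Var y) t' k = Var y" by simp_all
      then show ?thesis using pw_Var(1,2) ds pw.pw_Var[OF la, of y] pw_refl_split by metis
    qed
  next
    case (pw_Red P P' Q Q' Rs Rs')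
    have la: "list_all2 par (map (\<lambda>R. dsubst R t k) Rs) (map (\<lambda>R. dsubst R t' k) Rs')"
      by (rule la2_par_subst[OF pw_Red(5) assms(2)])
    have p1: "par (dsubst P (dlift t 0) (Suc k)) (dsubst P' (dlift t' 0) (Suc k))"
      by (rule par_subst[OF pw_Red(3) par_lift[OF assms(2)]])
    have p2: "par (dsubst Q t k) (dsubst Q' t' k)" by (rule par_subst[OF pw_Red(4) assms(2)])
    have "pw (dsubst L t k) (dsubst s' t' k)"
      unfolding pw_Red(1,2) dsubst_apps using pw.pw_Red[OF p1 p2 la] by simp
    then show ?thesis by (rule pw_refl_split)
  qed
  then show ?thesis using wsplit_prefix[OF whs_subst[OF L(1)]] by blast
qed

lemma par_wsplit: "par M N \<Longrightarrow> wsplit M N"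
proof (induct rule: par.induct)
  case (par_Var n)
  have "pw (apps (Var n) []) (apps (Var n) [])" by (rule pw.pw_Var) simp
  then show ?case by (auto intro: pw_refl_split)
next
  case (par_Abs s s')
  then show ?case by (auto intro: pw_refl_split pw.pw_Abs)
next
  case (par_App s s' t t')
  then show ?case using wsplit_apps[of s s' "[t]" "[t']"] by simp
next
  case (par_beta s s' t t')
  have "whstep (App (Abs s) t) (dsubst s t 0)" unfolding whstep_def
    by (rule exI[of _ s], rule exI[of _ t], rule exI[of _ "[]"]) simp
  then show ?case using wsplit_subst[OF par_beta(2) par_beta(3) par_beta(4), of 0]
    wsplit_prefix by blast
qed

section \<open>Backward preservation of head normal forms\<close>

lemma hred_pow_Abs: "(hred ^^ k) (Abs b) H \<Longrightarrow> \<exists>H'. H = Abs H' \<and> (hred ^^ k) b H'"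
proof (induct k arbitrary: H)
  case 0 then show ?case by simp
next
  case (Suc k)
  from Suc.prems obtain H0 where "(hred ^^ k) (Abs b) H0" "hred H0 H" by auto
  then obtain H0' where "H0 = Abs H0'" "(hred ^^ k) b H0'" "hred H0 H" using Suc.hyps by blast
  then obtain H' where "H = Abs H'" "hred H0' H'"
    using hred_abs_inv unfolding hred_def by blast
  then show ?case using \<open>(hred ^^ k) b H0'\<close> by auto
qed

lemma rt_hred_Abs: "hred\<^sup>*\<^sup>* b H \<Longrightarrow> hred\<^sup>*\<^sup>* (Abs b) (Abs H)"
  by (rule rtranclp_map[where f=Abs]) (auto simp: hred_def intro: hred_lab.hred_abs)

lemma has_hnf_Abs: "has_hnf b \<Longrightarrow> has_hnf (Abs b)"
  unfolding has_hnf_def using rt_hred_Abs by fastforce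

lemma has_hnf_prefix: "hred\<^sup>*\<^sup>* M L \<Longrightarrow> has_hnf L \<Longrightarrow> has_hnf M"
  unfolding has_hnf_def by (meson rtranclp_trans)

lemma par_apps: "par X X' \<Longrightarrow> list_all2 par Rs Rs' \<Longrightarrow> par (apps X Rs) (apps X' Rs')"
proof (induct Rs arbitrary: Rs')
  case Nil then show ?case by simp
next
  case (Cons R Rs)
  then obtain z zs where "Rs' = z # zs" "par R z" "list_all2 par Rs zs" by (auto simp: list_all2_Cons1)
  then show ?case using Cons.hyps[OF Cons.prems(1)] by (auto intro: par.par_App)
qed

lemma BW_aux:
  assumes IHk: "\<And>k' M N H. k' < k \<Longrightarrow> par M N \<Longrightarrow> (hred ^^ k') N H \<Longrightarrow> is_hnf H \<Longrightarrow> has_hnf M"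
  shows "par M N \<Longrightarrow> (hred ^^ k) N H \<Longrightarrow> is_hnf H \<Longrightarrow> has_hnf M"
proof (induct "size N" arbitrary: M N H rule: less_induct)
  case less
  from par_wsplit[OF less.prems(1)] obtain L where L: "whstep\<^sup>*\<^sup>* M L" "pw L N"
    unfolding wsplit_def by blast
  have "has_hnf L" using L(2)
  proof (cases rule: pw.cases)
    case (pw_Abs b b')
    obtain H' where "H = Abs H'" "(hred ^^ k) b' H'" using hred_pow_Abs less.prems(2) pw_Abs by blast
    moreover have "size b' < size N" using pw_Abs by simp
    ultimately have "has_hnf b" using less.hyps[of b' b H'] pw_Abs less.prems(3) by simp
    then show ?thesis using pw_Abs has_hnf_Abs by simp
  next
    case (pw_Var Rs Rs' y)
    then show ?thesis using is_hnf_hplug[of 0 Rs y] by (auto simp: has_hnf_def)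
  next
    case (pw_Red P P' Q Q' Rs Rs')
    have "\<not> is_hnf N" using redex_not_hnf[of 0 Rs' P' Q'] pw_Red by simp
    then obtain k' where k: "k = Suc k'" using less.prems(2,3) by (cases k) auto
    then obtain N1 where N1: "hred N N1" "(hred ^^ k') N1 H" using less.prems(2) by (metis relpowp_Suc_D2)
    have "hred N (apps (dsubst P' Q' 0) Rs')" using pw_Red whstep_hred unfolding whstep_def by blast
    then have "N1 = apps (dsubst P' Q' 0) Rs'" using N1(1) hred_det' by blast
    moreover have "par (apps (dsubst P Q 0) Rs) (apps (dsubst P' Q' 0) Rs')"
      by (rule par_apps[OF par_subst[OF pw_Red(3,4)] pw_Red(5)])
    ultimately have "has_hnf (apps (dsubst P Q 0) Rs)" using IHk[of k'] k N1(2) less.prems(3) by simp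
    moreover have "hred L (apps (dsubst P Q 0) Rs)" using pw_Red whstep_hred unfolding whstep_def by blast
    ultimately show ?thesis using has_hnf_prefix by blast
  qed
  then show ?case using has_hnf_prefix[OF whs_hred[OF L(1)]] by blast
qed

lemma BW_par: "par M N \<Longrightarrow> (hred ^^ k) N H \<Longrightarrow> is_hnf H \<Longrightarrow> has_hnf M"
proof (induct k arbitrary: M N H rule: less_induct)
  case (less k)
  show ?case by (rule BW_aux[OF less.hyps less.prems]) auto
qed

lemma BW: "beta\<^sup>*\<^sup>* M N \<Longrightarrow> has_hnf N \<Longrightarrow> has_hnf M"
proof (induct rule: converse_rtranclp_induct)
  case base then show ?case by simp
next
  case (step y z)
  then obtain k H where "(hred ^^ k) z H" "is_hnf H" using has_hnf_iff by blast
  then show ?case using BW_par beta_par[OF step(1)] by blast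
qed



lemma root_rel:
  assumes "(beta ^^ m) A B" "s \<longrightarrow> simple_term A"
  shows "(has_hnf A \<longleftrightarrow> has_hnf B) \<and>
    (has_hnf A \<longrightarrow> (\<exists>a y Rs Rs' c. hnf_of A = hplug a Rs (Var y) \<and> hnf_of B = hplug a Rs' (Var y) \<and>
       lsteps c Rs Rs' \<and> hnf_steps B \<le> hnf_steps A \<and>
       (s \<longrightarrow> c + (hnf_steps A - hnf_steps B) \<le> m \<and> (\<forall>R\<in>set Rs. simple_term R))))"
proof (cases "has_hnf A")
  case False
  have "\<not> has_hnf B" using BW[OF relpowp_imp_rtranclp[OF assms(1)]] False by blast
  then show ?thesis using False by simp
next
  case True
  have hA: "(hred ^^ hnf_steps A) A (hnf_of A)" "is_hnf (hnf_of A)" using has_hnf_D[OF True] by auto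
  have hs: "(hstep s ^^ hnf_steps A) A (hnf_of A)"
  proof (cases s)
    case True
    then show ?thesis using simple_path[OF _ \<open>has_hnf A\<close>] assms(2) by simp
  next
    case False
    then show ?thesis using hA(1) by (simp add: hred_hstep)
  qed
  obtain j a y Rs Rs' c where F: "(hred ^^ j) B (hplug a Rs' (Var y))" "hnf_of A = hplug a Rs (Var y)"
    "lsteps c Rs Rs'" "j \<le> hnf_steps A" "s \<longrightarrow> c + (hnf_steps A - j) \<le> m"
    using FW[OF hs hA(2) assms(1)] by blast
  have hB: "has_hnf B \<and> hnf_steps B = j \<and> hnf_of B = hplug a Rs' (Var y)"
    using hnf_char[OF F(1) is_hnf_hplug] .
  have simp_args: "s \<longrightarrow> (\<forall>R\<in>set Rs. simple_term R)"
  proof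
    assume s
    then have "\<forall>R\<in>set (hnf_args (hnf_of A)). simple_term R" using simple_path[OF _ True] assms(2) by simp
    then show "\<forall>R\<in>set Rs. simple_term R" using F(2) by (simp add: hnf_args_hplug)
  qed
  show ?thesis using True hB F simp_args
    by (intro conjI impI) (simp, blast)
qed

section \<open>Cursor relation\<close>

inductive crel :: "bool \<Rightarrow> nat \<Rightarrow> cursor \<Rightarrow> cursor \<Rightarrow> bool" where
  cr_root: "(beta ^^ m) A B \<Longrightarrow> (s \<longrightarrow> m \<le> n \<and> simple_term A) \<Longrightarrow> crel s n (CRoot A) (CRoot B)"
| cr_inner: "lsteps c Rs Rs' \<Longrightarrow> (s \<longrightarrow> c \<le> n \<and> (\<forall>R\<in>set Rs. simple_term R)) \<Longrightarrow>
    crel s n (CInner (hplug a Rs (Var y))) (CInner (hplug a Rs' (Var y)))"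

definition dropbit :: "cursor \<Rightarrow> cursor \<Rightarrow> nat" where
  "dropbit c c' = (if \<exists>a b. cursor_ann c = Some a \<and> cursor_ann c' = Some b \<and> b < a then 1 else 0)"

lemma spine_rel:
  assumes "lsteps c Rs Rs'" "s \<longrightarrow> (\<forall>R\<in>set Rs. simple_term R)"
  shows "(\<forall>d. spine_step (hplug a Rs (Var y)) d = None \<longleftrightarrow> spine_step (hplug a Rs' (Var y)) d = None) \<and>
    (\<exists>f. (\<forall>d x x'. spine_step (hplug a Rs (Var y)) d = Some x \<longrightarrow>
        spine_step (hplug a Rs' (Var y)) d = Some x' \<longrightarrow> crel s (f d) x x') \<and> f 0 + f 1 + f 2 \<le> c)"
proof (cases a)
  case (Suc a')
  have cr: "crel s c (CInner (hplug a' Rs (Var y))) (CInner (hplug a' Rs' (Var y)))"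
    by (rule cr_inner[OF assms(1)]) (use assms(2) in simp)
  show ?thesis
    using Suc cr by (intro conjI exI[of _ "\<lambda>d. if d = 0 then c else 0"]) auto
next
  case 0
  show ?thesis
  proof (cases Rs)
    case Nil
    then have "Rs' = []" using lsteps_length[OF assms(1)] by simp
    then show ?thesis using 0 Nil by (intro conjI exI[of _ "\<lambda>d. 0"]) auto
  next
    case (Cons R Rs0)
    from assms(1)[unfolded Cons] obtain m1 c0 R' Rs0' where
      e: "Rs' = R' # Rs0'" "c = m1 + c0" "lsteps c0 Rs0 Rs0'" "(beta ^^ m1) R R'"
      by (cases rule: lsteps.cases) auto
    have c1: "crel s c0 (CInner (hplug 0 Rs0 (Var y))) (CInner (hplug 0 Rs0' (Var y)))"
      by (rule cr_inner[OF e(3)]) (use assms(2) Cons in simp)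
    have c2: "crel s m1 (CRoot R) (CRoot R')"
      by (rule cr_root[OF e(4)]) (use assms(2) Cons in simp)
    show ?thesis using 0 Cons e c1 c2
      by (intro conjI exI[of _ "\<lambda>d. if d = 1 then c0 else if d = 2 then m1 else 0"]) auto
  qed
qed

lemma node_rel:
  assumes "crel s n c c'"
  shows "(\<forall>d. cursor_step c d = None \<longleftrightarrow> cursor_step c' d = None) \<and>
    (\<exists>f. (\<forall>d x x'. cursor_step c d = Some x \<longrightarrow> cursor_step c' d = Some x' \<longrightarrow> crel s (f d) x x') \<and>
       (s \<longrightarrow> f 0 + f 1 + f 2 + dropbit c c' \<le> n))"
  using assms
proof (cases rule: crel.cases)
  case (cr_root m A B)
  note R = root_rel[OF cr_root(3)] 
  have sA: "s \<longrightarrow> simple_term A" using cr_root(4) by simp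
  note R = root_rel[OF cr_root(3) sA]
  show ?thesis
  proof (cases "has_hnf A")
    case False
    then have "\<not> has_hnf B" using R by simp
    then show ?thesis using False cr_root by (intro conjI exI[of _ "\<lambda>d. 0"]) (auto simp: dropbit_def)
  next
    case True
    then have hB: "has_hnf B" using R by simp
    from True R obtain a y Rs Rs' k where F: "hnf_of A = hplug a Rs (Var y)" "hnf_of B = hplug a Rs' (Var y)"
      "lsteps k Rs Rs'" "hnf_steps B \<le> hnf_steps A"
      "s \<longrightarrow> k + (hnf_steps A - hnf_steps B) \<le> m \<and> (\<forall>R\<in>set Rs. simple_term R)" by blast
    have sR: "s \<longrightarrow> (\<forall>R\<in>set Rs. simple_term R)" using F(5) by blast
    from spine_rel[OF F(3) sR, of a y] obtain f where f:
      "\<forall>d. spine_step (hplug a Rs (Var y)) d = None \<longleftrightarrow> spine_step (hplug a Rs' (Var y)) d = None"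
      "\<forall>d x x'. spine_step (hplug a Rs (Var y)) d = Some x \<longrightarrow>
        spine_step (hplug a Rs' (Var y)) d = Some x' \<longrightarrow> crel s (f d) x x'" "f 0 + f 1 + f 2 \<le> k"
      by blast
    have db: "dropbit c c' \<le> hnf_steps A - hnf_steps B"
      using cr_root True hB by (auto simp: dropbit_def)
    have "s \<longrightarrow> f 0 + f 1 + f 2 + dropbit c c' \<le> n"
      using F(5) f(3) db cr_root(4) by auto
    then show ?thesis using f(1,2) cr_root True hB F(1,2) by (intro conjI exI[of _ f]) auto
  qed
next
  case (cr_inner k Rs Rs' a y)
  have sR: "s \<longrightarrow> (\<forall>R\<in>set Rs. simple_term R)" using cr_inner(4) by blast
  from spine_rel[OF cr_inner(3) sR, of a y] obtain f where f:
      "\<forall>d. spine_step (hplug a Rs (Var y)) d = None \<longleftrightarrow> spine_step (hplug a Rs' (Var y)) d = None"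
      "\<forall>d x x'. spine_step (hplug a Rs (Var y)) d = Some x \<longrightarrow>
        spine_step (hplug a Rs' (Var y)) d = Some x' \<longrightarrow> crel s (f d) x x'" "f 0 + f 1 + f 2 \<le> k"
      by blast
  have "dropbit c c' = 0" using cr_inner by (simp add: dropbit_def)
  then show ?thesis using f cr_inner by (intro conjI exI[of _ f]) auto
qed

lemma term_label_hplug: "lsteps k Rs Rs' \<Longrightarrow> term_label (hplug a Rs (Var y)) = term_label (hplug a Rs' (Var y))"
proof (cases a)
  case 0
  assume l: "lsteps k Rs Rs'"
  then have "length Rs = length Rs'" by (rule lsteps_length)
  then show ?thesis using 0 by (cases Rs; cases Rs') auto
qed simp

lemma label_rel:
  assumes "crel s n c c'"
  shows "cursor_label c = cursor_label c' \<and> (cursor_ann c = None \<longleftrightarrow> cursor_ann c' = None) \<and>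
    (\<forall>a b. cursor_ann c = Some a \<longrightarrow> cursor_ann c' = Some b \<longrightarrow> b \<le> a)"
  using assms
proof (cases rule: crel.cases)
  case (cr_root m A B)
  have sA: "s \<longrightarrow> simple_term A" using cr_root(4) by simp
  note R = root_rel[OF cr_root(3) sA]
  show ?thesis
  proof (cases "has_hnf A")
    case False
    then show ?thesis using R cr_root by simp
  next
    case True
    from True R obtain a y Rs Rs' k where F: "hnf_of A = hplug a Rs (Var y)" "hnf_of B = hplug a Rs' (Var y)"
      "lsteps k Rs Rs'" "hnf_steps B \<le> hnf_steps A" by blast
    then show ?thesis using True R cr_root term_label_hplug[OF F(3)] by simp
  qed
next
  case (cr_inner k Rs Rs' a y)
  then show ?thesis using term_label_hplug[OF cr_inner(3)] by simp
qed

lemma walk_rel: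
  "crel s n c c' \<Longrightarrow> (cursor_walk c p = None \<longleftrightarrow> cursor_walk c' p = None) \<and>
    (\<forall>x x'. cursor_walk c p = Some x \<longrightarrow> cursor_walk c' p = Some x' \<longrightarrow> (\<exists>n'. crel s n' x x'))"
proof (induct p arbitrary: c c' n)
  case Nil then show ?case by auto
next
  case (Cons d p)
  from node_rel[OF Cons.prems] obtain f where
    f: "\<forall>d. cursor_step c d = None \<longleftrightarrow> cursor_step c' d = None"
       "\<forall>d x x'. cursor_step c d = Some x \<longrightarrow> cursor_step c' d = Some x' \<longrightarrow> crel s (f d) x x'"
    by blast
  show ?case
  proof (cases "cursor_step c d")
    case None
    moreover have "cursor_step c' d = None" using f(1) None by blast
    ultimately show ?thesis by simp
  next
    case (Some x)
    have "cursor_step c' d \<noteq> None" using f(1) Some by (metis option.distinct(1))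
    then obtain x' where x': "cursor_step c' d = Some x'" by blast
    have "crel s (f d) x x'" using f(2) Some x' by blast
    then show ?thesis using Cons.hyps[of "f d" x x'] Some x' by simp
  qed
qed



definition drops :: "cursor \<Rightarrow> cursor \<Rightarrow> nat list set" where
  "drops c c' = {p. \<exists>x x'. cursor_walk c p = Some x \<and> cursor_walk c' p = Some x' \<and> dropbit x x' = 1}"

lemma drops_Nil: "[] \<in> drops c c' \<longleftrightarrow> dropbit c c' = 1"
  by (simp add: drops_def)

lemma drops_Cons: "d # p \<in> drops c c' \<longleftrightarrow>
   (\<exists>x x'. cursor_step c d = Some x \<and> cursor_step c' d = Some x' \<and> p \<in> drops x x')"
  by (cases "cursor_step c d"; cases "cursor_step c' d") (auto simp: drops_def)

lemma spine_big: "2 < d \<Longrightarrow> spine_step H d = None"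
  by (cases H) auto

lemma step_big: "2 < d \<Longrightarrow> cursor_step c d = None"
  by (cases c) (auto simp: spine_big)

lemma dropbit_le: "dropbit c c' \<le> 1"
  by (simp add: dropbit_def)

lemma card_drops:
  "crel True n c c' \<Longrightarrow> finite S \<Longrightarrow> \<forall>p\<in>S. length p < D \<Longrightarrow> card (S \<inter> drops c c') \<le> n"
proof (induct D arbitrary: S c c' n)
  case 0
  then have "S = {}" by auto
  then show ?case by simp
next
  case (Suc D)
  from node_rel[OF Suc.prems(1)] obtain f where
    f: "\<forall>d. cursor_step c d = None \<longleftrightarrow> cursor_step c' d = None"
       "\<forall>d x x'. cursor_step c d = Some x \<longrightarrow> cursor_step c' d = Some x' \<longrightarrow> crel True (f d) x x'"
       "f 0 + f 1 + f 2 + dropbit c c' \<le> n"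
    by blast
  define T where "T d = {p. d # p \<in> S \<inter> drops c c'}" for d
  have finT: "finite (T d)" for d
  proof -
    have "T d \<subseteq> Cons d -` S" by (auto simp: T_def)
    moreover have "finite (Cons d -` S)" by (rule finite_vimageI) (use Suc.prems(2) in auto)
    ultimately show ?thesis by (rule finite_subset)
  qed
  have Tb: "card (T d) \<le> f d" for d
  proof (cases "cursor_step c d")
    case None
    then have "T d = {}" by (auto simp: T_def drops_Cons)
    then show ?thesis by simp
  next
    case (Some x)
    have "cursor_step c' d \<noteq> None" using f(1) Some by (metis option.distinct(1))
    then obtain x' where x': "cursor_step c' d = Some x'" by blast
    have cr: "crel True (f d) x x'" using f(2) Some x' by blast
    have eq: "T d = (Cons d -` S) \<inter> drops x x'" using Some x' by (auto simp: T_def drops_Cons)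
    have "finite (Cons d -` S)" by (rule finite_vimageI) (use Suc.prems(2) in auto)
    moreover have "\<forall>p\<in>Cons d -` S. length p < D" using Suc.prems(3) by fastforce
    ultimately show ?thesis unfolding eq using Suc.hyps[OF cr] by blast
  qed
  define A where "A = {[]} \<inter> drops c c'"
  have cA: "card A \<le> dropbit c c'"
    by (cases "[] \<in> drops c c'") (auto simp: A_def drops_Nil)
  have sub: "S \<inter> drops c c' \<subseteq> A \<union> (Cons 0 ` T 0 \<union> Cons 1 ` T 1 \<union> Cons 2 ` T 2)"
  proof
    fix p assume p: "p \<in> S \<inter> drops c c'"
    show "p \<in> A \<union> (Cons 0 ` T 0 \<union> Cons 1 ` T 1 \<union> Cons 2 ` T 2)"
    proof (cases p)
      case Nil then show ?thesis using p by (simp add: A_def)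
    next
      case (Cons d q)
      have "d \<le> 2"
      proof (rule ccontr)
        assume "\<not> d \<le> 2"
        then have "cursor_step c d = None" by (simp add: step_big)
        then show False using p Cons by (simp add: drops_Cons)
      qed
      then have "d = 0 \<or> d = 1 \<or> d = 2" by auto
      moreover have "q \<in> T d" using p Cons by (simp add: T_def)
      ultimately show ?thesis using Cons by auto
    qed
  qed
  have fin: "finite (A \<union> (Cons 0 ` T 0 \<union> Cons 1 ` T 1 \<union> Cons 2 ` T 2))"
    using finT by (auto simp: A_def)
  have "card (S \<inter> drops c c') \<le> card (A \<union> (Cons 0 ` T 0 \<union> Cons 1 ` T 1 \<union> Cons 2 ` T 2))"
    by (rule card_mono[OF fin sub])
  also have "\<dots> \<le> card A + (card (Cons 0 ` T 0) + card (Cons 1 ` T 1) + card (Cons 2 ` T 2))"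
    by (meson add_le_mono card_Un_le dual_order.trans order_refl)
  also have "\<dots> \<le> card A + (card (T 0) + card (T 1) + card (T 2))"
    using card_image_le[OF finT] by (meson add_le_mono order_refl)
  also have "\<dots> \<le> dropbit c c' + (f 0 + f 1 + f 2)"
    using cA Tb by (meson add_le_mono)
  also have "\<dots> \<le> n" using f(3) by simp
  finally show ?case .
qed

lemma drops_finite: "crel True n c c' \<Longrightarrow> finite (drops c c')"
proof (rule ccontr)
  assume cr: "crel True n c c'" and inf: "infinite (drops c c')"
  obtain S where S: "S \<subseteq> drops c c'" "finite S" "card S = Suc n"
    using infinite_arbitrarily_large[OF inf] by blast
  have "\<forall>p\<in>S. length p < Suc (Max (length ` S))"
    using S(2) by (simp add: le_imp_less_Suc)
  then have "card (S \<inter> drops c c') \<le> n" by (rule card_drops[OF cr S(2)])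
  moreover have "S \<inter> drops c c' = S" using S(1) by blast
  ultimately show False using S(3) by simp
qed

lemma label_eq: "crel s k (CRoot X) (CRoot Y) \<Longrightarrow> bt_label X p = bt_label Y p"
proof -
  assume cr: "crel s k (CRoot X) (CRoot Y)"
  note W = walk_rel[OF cr, of p]
  show ?thesis
  proof (cases "cursor_walk (CRoot X) p")
    case None
    then show ?thesis using W by (simp add: bt_label_def)
  next
    case (Some x)
    have "cursor_walk (CRoot Y) p \<noteq> None" using W Some by (metis option.distinct(1))
    then obtain x' where x': "cursor_walk (CRoot Y) p = Some x'" by blast
    then obtain n' where "crel s n' x x'" using W Some by blast
    then show ?thesis using label_rel Some x' by (simp add: bt_label_def)
  qed
qed



theorem theorem4p11:
  fixes M N :: dB
  assumes "simple_term M"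
    and "\<not> bt_le_ev M N"
  shows "\<not> beta_eq M N"
proof
  assume "beta_eq M N"
  then obtain L where L: "beta\<^sup>*\<^sup>* M L" "beta\<^sup>*\<^sup>* N L" using beta_eq_join by blast
  obtain n where n: "(beta ^^ n) M L" using rtranclp_imp_relpowp[OF L(1)] by blast
  obtain m where m: "(beta ^^ m) N L" using rtranclp_imp_relpowp[OF L(2)] by blast
  have c1: "crel True n (CRoot M) (CRoot L)" by (rule cr_root[OF n]) (use assms(1) in simp)
  have c2: "crel False 0 (CRoot N) (CRoot L)" by (rule cr_root[OF m]) simp
  have lab: "bt_label M = bt_label N"
    using label_eq[OF c1] label_eq[OF c2] by (simp add: fun_eq_iff)
  have fin: "finite (drops (CRoot M) (CRoot L))" by (rule drops_finite[OF c1])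
  define l where "l = Suc (Max (insert 0 (length ` drops (CRoot M) (CRoot L))))"
  have lb: "p \<in> drops (CRoot M) (CRoot L) \<Longrightarrow> length p < l" for p
    using fin unfolding l_def by (simp add: le_imp_less_Suc)
  have "bt_le_ev M N"
    unfolding bt_le_ev_def
  proof (intro conjI exI[of _ l] allI impI lab)
    fix p assume p: "bt_label M p \<noteq> None" "l \<le> length p"
    obtain x where x: "cursor_walk (CRoot M) p = Some x" using p(1) by (auto simp: bt_label_def)
    note W1 = walk_rel[OF c1, of p] and W2 = walk_rel[OF c2, of p]
    have "cursor_walk (CRoot L) p \<noteq> None" using W1 x by (metis option.distinct(1))
    then obtain x' where x': "cursor_walk (CRoot L) p = Some x'" by blast
    have "cursor_walk (CRoot N) p \<noteq> None" using W2 x' by (metis option.distinct(1))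
    then obtain x'' where x'': "cursor_walk (CRoot N) p = Some x''" by blast
    obtain k1 where r1: "crel True k1 x x'" using W1 x x' by blast
    obtain k2 where r2: "crel False k2 x'' x'" using W2 x'' x' by blast
    note L1 = label_rel[OF r1] and L2 = label_rel[OF r2]
    have nd: "p \<notin> drops (CRoot M) (CRoot L)" using lb p(2) by fastforce
    then have "dropbit x x' \<noteq> 1" using x x' by (auto simp: drops_def)
    then have nb: "\<not> (\<exists>a b. cursor_ann x = Some a \<and> cursor_ann x' = Some b \<and> b < a)"
      by (auto simp: dropbit_def split: if_splits)
    have ann: "bt_ann M p = cursor_ann x" "bt_ann N p = cursor_ann x''"
      using x x'' by (simp_all add: bt_ann_def)
    show "bt_ann M p = None \<and> bt_ann N p = None \<or>
        (\<exists>k1 k2. bt_ann M p = Some k1 \<and> bt_ann N p = Some k2 \<and> k1 \<le> k2)"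
    proof (cases "cursor_ann x")
      case None
      then show ?thesis using L1 L2 ann by simp
    next
      case (Some a)
      then obtain b where b: "cursor_ann x' = Some b" using L1 by (cases "cursor_ann x'") auto
      then obtain c where c: "cursor_ann x'' = Some c" using L2 by (cases "cursor_ann x''") auto
      have "b \<le> c" using L2 b c by blast
      moreover have "a \<le> b" using nb Some b by auto
      ultimately show ?thesis using ann Some c by auto
    qed
  qed
  then show False using assms(2) by simp
qed


end
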